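(* Let $F$ be the fractal percolation in $[0,1]^2$ with parameters $M\in\mathbb{N}_{\geq2}$ and $p>1/M^2$, $p\leq 1$, $D=\log(M^2p)/\log M$, $r=1/M$. Let $x$ be a point which is a common corner of four level-1 squares $J_1,J_2,J_3,J_4$ (so $x$ lies in the interior of $[0,1]^2$), numbered so that $J_1$ and $J_2$ intersect only in $x$. Define $$E_2:=2(M-1)^2\sum_{n=1}^\infty r^{nD}\mathbb{E}V_0(C_n^1\cap C_n^2),\quad E_3:=4(M-1)^2\sum_{n=1}^\infty r^{nD}\mathbb{E}V_0(C_n^1\cap C_n^2\cap C_n^3),$$ $$E_4:=(M-1)^2\sum_{n=1}^\infty r^{nD}\mathbb{E}V_0\Big(\bigcap_{j=1}^4C_n^j\Big).$$ Then $$E_2=2(M-1)^2\left(\frac{1}{M^2p-1}-\frac{2}{M^2-1}+\frac{p}{M^2-p}\right),$$ $$E_3=4(M-1)^2\left(\frac{1}{M^2p-1}-\frac{3}{M^2-1}+\frac{3p}{M^2-p}-\frac{p^2}{M^2-p^2}\right),$$ $$E_4=(M-1)^2\left(\frac{1}{M^2p-1}-\frac{4}{M^2-1}+\frac{6p}{M^2-p}-\frac{4p^2}{M^2-p^2}+\frac{p^3}{M^2-p^3}\right).$$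
   Context: Fractal percolation in $[0,1]^2$: $F_0=[0,1]^2$; given $F_{n-1}$, a union of closed grid squares of side $M^{-(n-1)}$, each is divided into $M^2$ closed subsquares of side $M^{-n}$, each kept independently (of everything else) with probability $p$; $F_n$ is the union of kept subsquares. The level-1 squares are the $M^2$ closed subsquares of $[0,1]^2$ of side $1/M$. For a level-1 square $J_j$, $C_n^j$ is the union of those level-$n$ grid squares (side $M^{-n}$) contained in $J_j$ that do not belong to $F_n$. $V_0$ is the Euler characteristic. *)

theory Defs
  imports "HOL-Probability.Probability"
begin

definition grid_sq :: "nat \<Rightarrow> nat \<Rightarrow> nat \<times> nat \<Rightarrow> (real \<times> real) set" where
  "grid_sq M n q =
     {real (fst q) / real M ^ n .. (real (fst q) + 1) / real M ^ n} \<times>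
     {real (snd q) / real M ^ n .. (real (snd q) + 1) / real M ^ n}"

text \<open>Coins: X k q is the independent Bernoulli(p) decision for the level-k square q (k >= 1).
  A level-n square is kept (belongs to F_n) iff the coins of it and all of its ancestors
  at levels 1..n are True.  For n = 0 the unit square is always kept (F_0 = [0,1]^2).\<close>
definition kept :: "nat \<Rightarrow> (nat \<Rightarrow> nat \<times> nat \<Rightarrow> 'a \<Rightarrow> bool) \<Rightarrow> nat \<Rightarrow> nat \<times> nat \<Rightarrow> 'a \<Rightarrow> bool" where
  "kept M X n q \<omega> = (\<forall>k\<in>{1..n}. X k (fst q div M ^ (n - k), snd q div M ^ (n - k)) \<omega>)"

definition perc_F :: "nat \<Rightarrow> (nat \<Rightarrow> nat \<times> nat \<Rightarrow> 'a \<Rightarrow> bool) \<Rightarrow> nat \<Rightarrow> 'a \<Rightarrow> (real \<times> real) set" where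
  "perc_F M X n \<omega> = \<Union> {grid_sq M n q | q. fst q < M ^ n \<and> snd q < M ^ n \<and> kept M X n q \<omega>}"

definition Cset :: "nat \<Rightarrow> (nat \<Rightarrow> nat \<times> nat \<Rightarrow> 'a \<Rightarrow> bool) \<Rightarrow> nat \<Rightarrow> (real \<times> real) set \<Rightarrow> 'a \<Rightarrow> (real \<times> real) set" where
  "Cset M X n J \<omega> = \<Union> {grid_sq M n q | q. fst q < M ^ n \<and> snd q < M ^ n \<and>
       grid_sq M n q \<subseteq> J \<and> \<not> kept M X n q \<omega>}"

text \<open>Euler characteristic of a polyconvex set (finite union of compact convex sets),
  via the inclusion-exclusion formula, with chi(K) = 1 for nonempty compact convex K.\<close>
definition euler_char :: "('b::euclidean_space) set \<Rightarrow> int" where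
  "euler_char A = (THE e. \<forall>(K::nat \<Rightarrow> 'b set) m.
      (\<forall>i<m. compact (K i) \<and> convex (K i)) \<and> A = (\<Union>i<m. K i) \<longrightarrow>
      e = (\<Sum>I\<in>Pow {..<m} - {{}}. (-1) ^ (card I + 1) * (if (\<Inter>i\<in>I. K i) \<noteq> {} then 1 else 0)))"

end

theory Submission
  imports Defs
begin

lemma (in prob_space) INT_ev:
  assumes "finite K" "\<And>i. i \<in> K \<Longrightarrow> F i \<in> events"
  shows "space M \<inter> (\<Inter>i\<in>K. F i) \<in> events"
proof (cases "K = {}")
  case True then show ?thesis by simp
next
  case False
  have "(\<Inter>i\<in>K. F i) \<in> events" by (rule sets.finite_INT) (use assms False in auto)
  then show ?thesis by (rule sets.Int[OF sets.top])
qed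

lemma (in prob_space) blocks_prob:
  fixes A :: "'i \<Rightarrow> 'a set" and B :: "'j \<Rightarrow> 'i set"
  assumes ev: "\<And>i. i \<in> I \<Longrightarrow> A i \<in> events"
    and ind: "\<And>S. S \<subseteq> I \<Longrightarrow> finite S \<Longrightarrow> S \<noteq> {} \<Longrightarrow> prob (\<Inter>i\<in>S. A i) = p ^ card S"
  shows "finite T \<Longrightarrow> (\<And>j. j \<in> T \<Longrightarrow> finite (B j) \<and> B j \<subseteq> I) \<Longrightarrow> disjoint_family_on B T
    \<Longrightarrow> finite S \<Longrightarrow> S \<subseteq> I \<Longrightarrow> (\<And>j. j \<in> T \<Longrightarrow> S \<inter> B j = {}) \<Longrightarrow>
    prob (space M \<inter> (\<Inter>i\<in>S. A i) \<inter> (\<Inter>j\<in>T. space M - (\<Inter>i\<in>B j. A i)))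
     = p ^ card S * (\<Prod>j\<in>T. 1 - p ^ card (B j))"
proof (induction T arbitrary: S rule: finite_induct)
  case empty
  show ?case
  proof (cases "S = {}")
    case True
    then show ?thesis using prob_space by simp
  next
    case False
    then obtain s where s: "s \<in> S" by blast
    have "A s \<subseteq> space M" using ev[of s] s empty.prems(4) sets.sets_into_space by blast
    then have "(\<Inter>i\<in>S. A i) \<subseteq> space M" using s by blast
    then have "space M \<inter> (\<Inter>i\<in>S. A i) = (\<Inter>i\<in>S. A i)" by (rule Int_absorb1)
    then show ?thesis using ind[of S] empty.prems False by simp
  qed
next
  case (insert j T)
  let ?E = "\<lambda>S. space M \<inter> (\<Inter>i\<in>S. A i) \<inter> (\<Inter>j\<in>T. space M - (\<Inter>i\<in>B j. A i))"
  have dT: "disjoint_family_on B T" using insert.prems(2) by (simp add: disjoint_family_on_def)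
  have SB: "S \<inter> B j = {}" using insert.prems by simp
  have Bj: "finite (B j)" "B j \<subseteq> I" using insert.prems by auto
  have SBT: "(S \<union> B j) \<inter> B j' = {}" if j': "j' \<in> T" for j'
  proof -
    have "j \<noteq> j'" using insert.hyps(2) j' by blast
    then have "B j \<inter> B j' = {}" using insert.prems(2) j' unfolding disjoint_family_on_def by blast
    moreover have "S \<inter> B j' = {}" using insert.prems(5) j' by blast
    ultimately show ?thesis by blast
  qed
  have BT: "\<And>j. j \<in> T \<Longrightarrow> finite (B j) \<and> B j \<subseteq> I" using insert.prems(1) by blast
  have IH1: "prob (?E S) = p ^ card S * (\<Prod>j\<in>T. 1 - p ^ card (B j))"
    by (rule insert.IH) (use BT dT insert.prems(3,4,5) in auto)
  have IH2: "prob (?E (S \<union> B j)) = p ^ card (S \<union> B j) * (\<Prod>j\<in>T. 1 - p ^ card (B j))"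
    by (rule insert.IH) (use BT dT insert.prems(3,4) Bj SBT in auto)
  have cS: "card (S \<union> B j) = card S + card (B j)"
    using card_Un_disjoint[OF _ Bj(1) SB] insert.prems by simp
  have evB: "space M - (\<Inter>i\<in>B j'. A i) \<in> events" if "j' \<in> insert j T" for j'
  proof -
    have "B j' \<subseteq> I" "finite (B j')" using insert.prems(1) that by auto
    have "space M \<inter> (\<Inter>i\<in>B j'. A i) \<in> events"
      by (rule INT_ev) (use ev \<open>B j' \<subseteq> I\<close> \<open>finite (B j')\<close> in auto)
    then have "space M - (space M \<inter> (\<Inter>i\<in>B j'. A i)) \<in> events" by auto
    then show "space M - (\<Inter>i\<in>B j'. A i) \<in> events" by (simp add: Diff_Int)
  qed
  have evS: "?E S \<in> events" if "S \<subseteq> I" "finite S" for S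
  proof -
    have "space M \<inter> (\<Inter>j\<in>T. space M - (\<Inter>i\<in>B j. A i)) \<in> events"
      by (rule INT_ev) (use evB insert.hyps(1) in auto)
    moreover have "space M \<inter> (\<Inter>i\<in>S. A i) \<in> events"
      by (rule INT_ev) (use ev that in auto)
    ultimately have "(space M \<inter> (\<Inter>i\<in>S. A i)) \<inter> (space M \<inter> (\<Inter>j\<in>T. space M - (\<Inter>i\<in>B j. A i))) \<in> events"
      by (blast intro: sets.Int)
    moreover have "(space M \<inter> (\<Inter>i\<in>S. A i)) \<inter> (space M \<inter> (\<Inter>j\<in>T. space M - (\<Inter>i\<in>B j. A i))) = ?E S"
      by blast
    ultimately show ?thesis by simp
  qed
  have eq: "space M \<inter> (\<Inter>i\<in>S. A i) \<inter> (\<Inter>j\<in>insert j T. space M - (\<Inter>i\<in>B j. A i))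
      = ?E S - ?E (S \<union> B j)"
  proof -
    have "(\<Inter>j\<in>insert j T. space M - (\<Inter>i\<in>B j. A i)) = (space M - (\<Inter>i\<in>B j. A i)) \<inter> (\<Inter>j\<in>T. space M - (\<Inter>i\<in>B j. A i))"
      by simp
    moreover have "(\<Inter>i\<in>S \<union> B j. A i) = (\<Inter>i\<in>S. A i) \<inter> (\<Inter>i\<in>B j. A i)" by blast
    ultimately show ?thesis by blast
  qed
  have sub: "?E (S \<union> B j) \<subseteq> ?E S" by blast
  have "prob (?E S - ?E (S \<union> B j)) = prob (?E S) - prob (?E (S \<union> B j))"
    using evS[of S] evS[of "S \<union> B j"] insert.prems Bj sub
    by (intro finite_measure_Diff) auto
  then show ?case unfolding eq IH1 IH2 cS using insert.hyps
    by (simp add: power_add algebra_simps)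
qed

lemma alt_pow_sum: "finite S \<Longrightarrow> (\<Sum>I\<in>Pow S. (-1::int) ^ card I) = (if S = {} then 1 else 0)"
proof (induction S rule: finite_induct)
  case empty then show ?case by simp
next
  case (insert a S)
  have "Pow (insert a S) = Pow S \<union> insert a ` Pow S" by (rule Pow_insert)
  moreover have "Pow S \<inter> insert a ` Pow S = {}" using insert.hyps by auto
  moreover have "(\<Sum>I\<in>insert a ` Pow S. (-1::int) ^ card I) = (\<Sum>I\<in>Pow S. (-1::int) ^ card (insert a I))"
    by (rule sum.reindex_cong[where l="insert a"]) (use insert.hyps in \<open>auto simp: inj_on_def\<close>)
  moreover have "\<And>I. I \<in> Pow S \<Longrightarrow> card (insert a I) = Suc (card I)"
    using insert.hyps by (auto intro!: card_insert_disjoint dest: finite_subset)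
  ultimately have "(\<Sum>I\<in>Pow (insert a S). (-1::int) ^ card I) = 0"
    using insert.hyps by (simp add: sum.union_disjoint sum_negf)
  then show ?case by simp
qed

lemma euler_char_empty: "euler_char ({} :: 'b::euclidean_space set) = 0"
  unfolding euler_char_def
proof (rule the_equality)
  show "\<forall>(K::nat \<Rightarrow> 'b set) m. (\<forall>i<m. compact (K i) \<and> convex (K i)) \<and> {} = (\<Union>i<m. K i) \<longrightarrow>
      0 = (\<Sum>I\<in>Pow {..<m} - {{}}. (-1::int) ^ (card I + 1) * (if (\<Inter>i\<in>I. K i) \<noteq> {} then 1 else 0))"
  proof (intro allI impI)
    fix K :: "nat \<Rightarrow> 'b set" and m
    assume h: "(\<forall>i<m. compact (K i) \<and> convex (K i)) \<and> {} = (\<Union>i<m. K i)"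
    have "\<And>I. I \<in> Pow {..<m} - {{}} \<Longrightarrow> (\<Inter>i\<in>I. K i) = {}"
    proof -
      fix I assume "I \<in> Pow {..<m} - {{}}"
      then obtain i where "i \<in> I" "i < m" by auto
      then have "(\<Inter>i\<in>I. K i) \<subseteq> K i" "K i = {}" using h by auto
      then show "(\<Inter>i\<in>I. K i) = {}" by blast
    qed
    then show "0 = (\<Sum>I\<in>Pow {..<m} - {{}}. (-1::int) ^ (card I + 1) * (if (\<Inter>i\<in>I. K i) \<noteq> {} then 1 else 0))"
      by simp
  qed
next
  fix e assume "\<forall>(K::nat \<Rightarrow> 'b set) m. (\<forall>i<m. compact (K i) \<and> convex (K i)) \<and> {} = (\<Union>i<m. K i) \<longrightarrow>
      e = (\<Sum>I\<in>Pow {..<m} - {{}}. (-1::int) ^ (card I + 1) * (if (\<Inter>i\<in>I. K i) \<noteq> {} then 1 else 0))"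
  from spec[OF spec[OF this, of "\<lambda>_. {}"], of 0] show "e = 0" by simp
qed

lemma euler_char_sing: "euler_char ({x} :: 'b::euclidean_space set) = 1"
  unfolding euler_char_def
proof (rule the_equality)
  show "\<forall>(K::nat \<Rightarrow> 'b set) m. (\<forall>i<m. compact (K i) \<and> convex (K i)) \<and> {x} = (\<Union>i<m. K i) \<longrightarrow>
      1 = (\<Sum>I\<in>Pow {..<m} - {{}}. (-1::int) ^ (card I + 1) * (if (\<Inter>i\<in>I. K i) \<noteq> {} then 1 else 0))"
  proof (intro allI impI)
    fix K :: "nat \<Rightarrow> 'b set" and m
    assume h: "(\<forall>i<m. compact (K i) \<and> convex (K i)) \<and> {x} = (\<Union>i<m. K i)"
    define S where "S = {i. i < m \<and> K i \<noteq> {}}"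
    have fS: "finite S" unfolding S_def by auto
    have "x \<in> (\<Union>i<m. K i)" using h by blast
    then obtain i where "i < m" "x \<in> K i" by blast
    then have Sne: "S \<noteq> {}" unfolding S_def by auto
    have Ki: "K i = {x}" if "i \<in> S" for i
    proof -
      have "i < m" "K i \<noteq> {}" using that unfolding S_def by auto
      moreover have "K i \<subseteq> (\<Union>i<m. K i)" using \<open>i < m\<close> by blast
      then have "K i \<subseteq> {x}" using h by simp
      ultimately show ?thesis by blast
    qed
    have cond: "\<And>I. I \<in> Pow {..<m} - {{}} \<Longrightarrow> ((\<Inter>i\<in>I. K i) \<noteq> {}) = (I \<subseteq> S)"
    proof -
      fix I assume I: "I \<in> Pow {..<m} - {{}}"
      show "((\<Inter>i\<in>I. K i) \<noteq> {}) = (I \<subseteq> S)"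
      proof
        assume "(\<Inter>i\<in>I. K i) \<noteq> {}" then show "I \<subseteq> S" using I unfolding S_def by auto
      next
        assume "I \<subseteq> S"
        then have "(\<Inter>i\<in>I. K i) = (\<Inter>i\<in>I. {x})" using Ki by (intro INF_cong) auto
        also have "\<dots> = {x}" using I by auto
        finally have "(\<Inter>i\<in>I. K i) = {x}" .
        then show "(\<Inter>i\<in>I. K i) \<noteq> {}" by simp
      qed
    qed
    have "(\<Sum>I\<in>Pow {..<m} - {{}}. (-1::int) ^ (card I + 1) * (if (\<Inter>i\<in>I. K i) \<noteq> {} then 1 else 0))
        = (\<Sum>I\<in>Pow {..<m} - {{}}. (if I \<subseteq> S then (-1::int) ^ (card I + 1) else 0))"
      by (rule sum.cong) (auto simp: cond)
    also have "\<dots> = (\<Sum>I\<in>{I\<in>Pow {..<m} - {{}}. I \<subseteq> S}. (-1::int) ^ (card I + 1))"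
      by (rule sum.inter_filter[symmetric]) simp
    also have "{I\<in>Pow {..<m} - {{}}. I \<subseteq> S} = Pow S - {{}}" unfolding S_def by blast
    also have "(\<Sum>I\<in>Pow S - {{}}. (-1::int) ^ (card I + 1)) = - (\<Sum>I\<in>Pow S - {{}}. (-1::int) ^ card I)"
      by (simp add: sum_negf)
    also have "(\<Sum>I\<in>Pow S - {{}}. (-1::int) ^ card I) = (\<Sum>I\<in>Pow S. (-1::int) ^ card I) - 1"
      using fS by (simp add: sum_diff1)
    also have "\<dots> = -1" using alt_pow_sum[OF fS] Sne by simp
    finally show "1 = (\<Sum>I\<in>Pow {..<m} - {{}}. (-1::int) ^ (card I + 1) * (if (\<Inter>i\<in>I. K i) \<noteq> {} then 1 else 0))"
      by simp
  qed
next
  fix e assume EA: "\<forall>(K::nat \<Rightarrow> 'b set) m. (\<forall>i<m. compact (K i) \<and> convex (K i)) \<and> {x} = (\<Union>i<m. K i) \<longrightarrow>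
      e = (\<Sum>I\<in>Pow {..<m} - {{}}. (-1::int) ^ (card I + 1) * (if (\<Inter>i\<in>I. K i) \<noteq> {} then 1 else 0))"
  have P1: "Pow {..<1::nat} - {{}} = {{0}}" by (auto simp: lessThan_Suc)
  have H1: "(\<forall>i<1::nat. compact {x} \<and> convex {x}) \<and> {x} = (\<Union>i<1::nat. {x})" by auto
  have "e = (\<Sum>I\<in>Pow {..<1::nat} - {{}}. (-1::int) ^ (card I + 1) * (if (\<Inter>i\<in>I. {x}) \<noteq> {} then 1 else 0))"
    using mp[OF spec[OF spec[OF EA, of "\<lambda>_. {x}"], of 1] H1] .
  also have "\<dots> = 1" unfolding P1 by simp
  finally show "e = 1" .
qed

lemma sing1:
  fixes a1 a2 M :: nat and t :: real
  assumes M: "M > 0"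
    and h: "{real a1 / M .. (real a1 + 1) / M} \<inter> {real a2 / M .. (real a2 + 1) / M} = {t}"
  shows "(a2 = a1 + 1 \<or> a1 = a2 + 1) \<and> t = real (max a1 a2) / M"
proof -
  have Mp: "real M > 0" using M by simp
  have "t \<in> {real a1 / M .. (real a1 + 1) / M} \<inter> {real a2 / M .. (real a2 + 1) / M}" using h by simp
  then have t1: "real a1 / M \<le> t" "t \<le> (real a1 + 1) / M" and t2: "real a2 / M \<le> t" "t \<le> (real a2 + 1) / M"
    by auto
  have ne: "a1 \<noteq> a2"
  proof
    assume "a1 = a2"
    then have "real a1 / M \<in> {t}" "(real a1 + 1) / M \<in> {t}" using h[symmetric] Mp
      by (auto simp: divide_right_mono)
    then have "real a1 / M = (real a1 + 1) / M" by simp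
    then show False using Mp by (simp add: field_simps)
  qed
  have A: "real a1 \<le> t * M" "t * M \<le> real a1 + 1" "real a2 \<le> t * M" "t * M \<le> real a2 + 1"
    using t1 t2 Mp by (simp_all add: field_simps)
  then have "real a2 \<le> real a1 + 1" "real a1 \<le> real a2 + 1" by linarith+
  then have "a2 = a1 + 1 \<or> a1 = a2 + 1" using ne by linarith
  moreover have "t * M = real (max a1 a2)" using A calculation by auto
  ultimately show ?thesis using Mp by (simp add: field_simps)
qed

lemma dl1: assumes "(M::real) > 0" "N > 0" shows "x / (M * N) \<le> y / M \<longleftrightarrow> x \<le> y * N" (is "_ \<longleftrightarrow> ?R")
proof -
  have "y / M = (y * N) / (M * N)" using assms by simp
  then have "(x / (M * N) \<le> y / M) \<longleftrightarrow> (x / (M * N) \<le> (y * N) / (M * N))" by (simp only:)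
  also have "\<dots> \<longleftrightarrow> ?R" using mult_pos_pos[OF assms] by (subst divide_le_cancel) linarith
  finally show ?thesis .
qed

lemma dl2: assumes "(M::real) > 0" "N > 0" shows "y / M \<le> x / (M * N) \<longleftrightarrow> y * N \<le> x" (is "_ \<longleftrightarrow> ?R")
proof -
  have "y / M = (y * N) / (M * N)" using assms by simp
  then have "(y / M \<le> x / (M * N)) \<longleftrightarrow> ((y * N) / (M * N) \<le> x / (M * N))" by (simp only:)
  also have "\<dots> \<longleftrightarrow> ?R" using mult_pos_pos[OF assms] by (subst divide_le_cancel) linarith
  finally show ?thesis .
qed

definition Qf :: "nat \<Rightarrow> nat \<Rightarrow> nat \<Rightarrow> nat" where
  "Qf N a u = (if u = a then u * N else u * N - 1)"

lemma onedim:
  fixes M N a u q :: nat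
  assumes M: "M > 0" and N: "N > 0" and u: "u = a \<or> u = a + 1"
  shows "(real a / M \<le> real q / (M * N) \<and> (real q + 1) / (M * N) \<le> (real a + 1) / M \<and>
          real q / (M * N) \<le> real u / M \<and> real u / M \<le> (real q + 1) / (M * N))
       \<longleftrightarrow> q = Qf N a u"
proof -
  have Mp: "real M > 0" and Np: "real N > 0" using M N by auto
  have "(real a / M \<le> real q / (M * N) \<and> (real q + 1) / (M * N) \<le> (real a + 1) / M \<and>
          real q / (M * N) \<le> real u / M \<and> real u / M \<le> (real q + 1) / (M * N))
       \<longleftrightarrow> (real a * N \<le> real q \<and> real q + 1 \<le> real a * N + N \<and> real q \<le> real u * N \<and> real u * N \<le> real q + 1)"
    using Mp Np by (simp add: dl1 dl2 algebra_simps)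
  also have "\<dots> \<longleftrightarrow> (a * N \<le> q \<and> q + 1 \<le> a * N + N \<and> q \<le> u * N \<and> u * N \<le> q + 1)"
    by (metis of_nat_le_iff of_nat_add of_nat_mult of_nat_1)
  also have "\<dots> \<longleftrightarrow> q = Qf N a u"
    using u N unfolding Qf_def by (cases "u = a") (auto simp: algebra_simps)
  finally show ?thesis .
qed

lemma Qf_lt: "N > 0 \<Longrightarrow> a < M \<Longrightarrow> (u = a \<or> u = a + 1) \<Longrightarrow> Qf N a u < M * N"
proof -
  assume N: "N > 0" and a: "a < M" and u: "u = a \<or> u = a + 1"
  have "(a + 1) * N \<le> M * N" using a by (intro mult_right_mono) auto
  then show ?thesis using u N a unfolding Qf_def by (cases "u = a") (auto simp: algebra_simps)
qed

lemma Qf_div: "N > 0 \<Longrightarrow> (u = a \<or> u = a + 1) \<Longrightarrow> Qf N a u div N = a"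
proof -
  assume N: "N > 0" and u: "u = a \<or> u = a + 1"
  show ?thesis
  proof (rule div_nat_eqI)
    show "N * a \<le> Qf N a u" "Qf N a u < N * Suc a" using u N unfolding Qf_def
      by (cases "u = a"; auto simp: algebra_simps)+
  qed
qed

lemma twodim:
  fixes M n a b u v :: nat and q :: "nat \<times> nat"
  assumes M: "M > 0" and u: "u = a \<or> u = a + 1" and v: "v = b \<or> v = b + 1"
  shows "(grid_sq M (Suc n) q \<subseteq> grid_sq M 1 (a, b) \<and> (real u / M, real v / M) \<in> grid_sq M (Suc n) q)
     \<longleftrightarrow> q = (Qf (M ^ n) a u, Qf (M ^ n) b v)"
proof -
  have N: "M ^ n > 0" using M by simp
  have Mp: "real M > 0" using M by simp
  have rM: "real M ^ Suc n = real M * real (M ^ n)" by simp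
  have ne1: "real (fst q) / (real M * real (M ^ n)) \<le> (real (fst q) + 1) / (real M * real (M ^ n))"
   and ne2: "real (snd q) / (real M * real (M ^ n)) \<le> (real (snd q) + 1) / (real M * real (M ^ n))"
    using Mp N by (simp_all add: divide_right_mono)
  have "(grid_sq M (Suc n) q \<subseteq> grid_sq M 1 (a, b) \<and> (real u / M, real v / M) \<in> grid_sq M (Suc n) q)
    \<longleftrightarrow> ((real a / M \<le> real (fst q) / (M * M ^ n) \<and> (real (fst q) + 1) / (M * M ^ n) \<le> (real a + 1) / M \<and>
          real (fst q) / (M * M ^ n) \<le> real u / M \<and> real u / M \<le> (real (fst q) + 1) / (M * M ^ n)) \<and>
         (real b / M \<le> real (snd q) / (M * M ^ n) \<and> (real (snd q) + 1) / (M * M ^ n) \<le> (real b + 1) / M \<and>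
          real (snd q) / (M * M ^ n) \<le> real v / M \<and> real v / M \<le> (real (snd q) + 1) / (M * M ^ n)))"
    unfolding grid_sq_def rM using ne1 ne2
    by (simp add: times_subset_iff atLeastatMost_subset_iff not_less) (auto simp: linorder_not_less)
  also have "\<dots> \<longleftrightarrow> fst q = Qf (M ^ n) a u \<and> snd q = Qf (M ^ n) b v"
    using onedim[OF M N u, of "fst q"] onedim[OF M N v, of "snd q"] by simp
  finally show ?thesis by (cases q) auto
qed

lemma Times_sing: "A \<times> B = {z} \<Longrightarrow> A = {fst z} \<and> B = {snd z}"
proof -
  assume h: "A \<times> B = {z}"
  have z: "fst z \<in> A" "snd z \<in> B" using h by (metis SigmaE insertI1 prod.collapse fst_conv snd_conv)+
  have "A \<subseteq> {fst z}"
  proof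
    fix a assume "a \<in> A" then have "(a, snd z) \<in> A \<times> B" using z by simp
    then have "(a, snd z) = z" using h by auto
    then show "a \<in> {fst z}" by (cases z) auto
  qed
  moreover have "B \<subseteq> {snd z}"
  proof
    fix b assume "b \<in> B" then have "(fst z, b) \<in> A \<times> B" using z by simp
    then have "(fst z, b) = z" using h by auto
    then show "b \<in> {snd z}" by (cases z) auto
  qed
  ultimately show ?thesis using z by blast
qed

lemma cornerpos:
  fixes M a u :: nat
  assumes "M > 0" "real a / M \<le> real u / M" "real u / M \<le> (real a + 1) / M"
  shows "u = a \<or> u = a + 1"
proof -
  have "real a \<le> real u" "real u \<le> real a + 1" using assms by (simp_all add: divide_le_cancel)
  then show ?thesis by linarith
qed

lemma frac_lem:
  fixes Q w :: real
  assumes "Q > 0" "w < Q"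
  shows "(w / Q) / (1 - w / Q) = w / (Q - w)"
proof -
  have "1 - w / Q = (Q - w) / Q" using assms by (simp add: field_simps)
  then show ?thesis using assms by simp
qed

lemma pow_swap: "(c * (p::real) ^ m) ^ Suc n = c ^ Suc n * (p ^ Suc n) ^ m"
proof -
  have "(c * p ^ m) ^ Suc n = c ^ Suc n * (p ^ m) ^ Suc n" by (simp add: power_mult_distrib)
  also have "(p ^ m) ^ Suc n = (p ^ Suc n) ^ m" by (metis power_mult mult.commute)
  finally show ?thesis .
qed

theorem lemma5p10:
  fixes M :: nat and p :: real
    and P :: "'a measure"
    and X :: "nat \<Rightarrow> nat \<times> nat \<Rightarrow> 'a \<Rightarrow> bool"
    and x :: "real \<times> real"
    and J :: "nat \<Rightarrow> nat \<times> nat"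
  assumes M2: "M \<ge> 2"
    and p_gt: "p > 1 / real M ^ 2" and p_le: "p \<le> 1"
    and prob: "prob_space P"
    and indep: "prob_space.indep_vars P (\<lambda>_. count_space UNIV) (\<lambda>(k, q). X k q)
                  {(k, q). 1 \<le> k \<and> fst q < M ^ k \<and> snd q < M ^ k}"
    and bern: "\<And>k q. 1 \<le> k \<Longrightarrow> fst q < M ^ k \<Longrightarrow> snd q < M ^ k \<Longrightarrow>
                  measure P {\<omega> \<in> space P. X k q \<omega>} = p"
    and J_valid: "\<And>j. j \<in> {1..4} \<Longrightarrow> fst (J j) < M \<and> snd (J j) < M"
    and J_inj: "inj_on J {1..4}"
    and x_corner: "\<And>j. j \<in> {1..4} \<Longrightarrow> x \<in> grid_sq M 1 (J j)"
    and J12: "grid_sq M 1 (J 1) \<inter> grid_sq M 1 (J 2) = {x}"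
  defines "D \<equiv> ln (real M ^ 2 * p) / ln (real M)"
    and "r \<equiv> 1 / real M"
    and "C \<equiv> (\<lambda>n j \<omega>. Cset M X n (grid_sq M 1 (J j)) \<omega>)"
  defines "E2 \<equiv> 2 * (real M - 1) ^ 2 * (\<Sum>n. r powr (real (Suc n) * D) *
              integral\<^sup>L P (\<lambda>\<omega>. real_of_int (euler_char (C (Suc n) 1 \<omega> \<inter> C (Suc n) 2 \<omega>))))"
    and "E3 \<equiv> 4 * (real M - 1) ^ 2 * (\<Sum>n. r powr (real (Suc n) * D) *
              integral\<^sup>L P (\<lambda>\<omega>. real_of_int (euler_char
                 (C (Suc n) 1 \<omega> \<inter> C (Suc n) 2 \<omega> \<inter> C (Suc n) 3 \<omega>))))"
    and "E4 \<equiv> (real M - 1) ^ 2 * (\<Sum>n. r powr (real (Suc n) * D) *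
              integral\<^sup>L P (\<lambda>\<omega>. real_of_int (euler_char (\<Inter>j\<in>{1..4}. C (Suc n) j \<omega>))))"
  shows "E2 = 2 * (real M - 1) ^ 2 *
              (1 / (real M ^ 2 * p - 1) - 2 / (real M ^ 2 - 1) + p / (real M ^ 2 - p)) \<and>
         E3 = 4 * (real M - 1) ^ 2 *
              (1 / (real M ^ 2 * p - 1) - 3 / (real M ^ 2 - 1) + 3 * p / (real M ^ 2 - p)
               - p ^ 2 / (real M ^ 2 - p ^ 2)) \<and>
         E4 = (real M - 1) ^ 2 *
              (1 / (real M ^ 2 * p - 1) - 4 / (real M ^ 2 - 1) + 6 * p / (real M ^ 2 - p)
               - 4 * p ^ 2 / (real M ^ 2 - p ^ 2) + p ^ 3 / (real M ^ 2 - p ^ 3))"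
proof -
  interpret P: prob_space P by (rule prob)
  have M0: "M > 0" and Mr: "real M \<ge> 2" using M2 by auto
  have Mp: "real M > 0" using M0 by simp
  obtain a1 b1 a2 b2 where J1: "J 1 = (a1, b1)" and J2: "J 2 = (a2, b2)" by (metis prod.exhaust)
  have "grid_sq M 1 (J 1) \<inter> grid_sq M 1 (J 2) =
     ({real a1 / M .. (real a1 + 1) / M} \<inter> {real a2 / M .. (real a2 + 1) / M}) \<times>
     ({real b1 / M .. (real b1 + 1) / M} \<inter> {real b2 / M .. (real b2 + 1) / M})"
    unfolding grid_sq_def J1 J2 by (simp add: Times_Int_Times)
  with J12 have "({real a1 / M .. (real a1 + 1) / M} \<inter> {real a2 / M .. (real a2 + 1) / M}) \<times>
     ({real b1 / M .. (real b1 + 1) / M} \<inter> {real b2 / M .. (real b2 + 1) / M}) = {x}" by simp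
  from Times_sing[OF this] have Ia: "{real a1 / M .. (real a1 + 1) / M} \<inter> {real a2 / M .. (real a2 + 1) / M} = {fst x}"
    and Ib: "{real b1 / M .. (real b1 + 1) / M} \<inter> {real b2 / M .. (real b2 + 1) / M} = {snd x}" by auto
  define u where "u = max a1 a2"
  define v where "v = max b1 b2"
  have xa: "fst x = real u / M" using sing1[OF M0 Ia] unfolding u_def by blast
  have xb: "snd x = real v / M" using sing1[OF M0 Ib] unfolding v_def by blast
  have xuv: "x = (real u / M, real v / M)" using xa xb by (cases x) simp
  have uv: "(u = fst (J j) \<or> u = fst (J j) + 1) \<and> (v = snd (J j) \<or> v = snd (J j) + 1)" if j: "j \<in> {1..4}" for j
  proof -
    have "x \<in> grid_sq M 1 (J j)" using x_corner j by blast
    then have "real (fst (J j)) / M \<le> real u / M" "real u / M \<le> (real (fst (J j)) + 1) / M"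
       "real (snd (J j)) / M \<le> real v / M" "real v / M \<le> (real (snd (J j)) + 1) / M"
      unfolding grid_sq_def xuv by (auto simp: mem_Times_iff)
    then show ?thesis using cornerpos[OF M0] by blast
  qed
  define Q where "Q = (\<lambda>n j. (Qf (M ^ n) (fst (J j)) u, Qf (M ^ n) (snd (J j)) v))"
  have Qlt: "fst (Q n j) < M ^ Suc n \<and> snd (Q n j) < M ^ Suc n" if j: "j \<in> {1..4}" for n j
  proof -
    have N: "M ^ n > 0" using M0 by simp
    show ?thesis unfolding Q_def using Qf_lt[OF N _ ] J_valid[OF j] uv[OF j] by simp
  qed
  have Qdiv: "fst (Q n j) div M ^ n = fst (J j) \<and> snd (Q n j) div M ^ n = snd (J j)" if j: "j \<in> {1..4}" for n j
  proof -
    have N: "M ^ n > 0" using M0 by simp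
    show ?thesis unfolding Q_def using Qf_div[OF N] uv[OF j] by simp
  qed
  have memC: "x \<in> C (Suc n) j \<omega> \<longleftrightarrow> \<not> kept M X (Suc n) (Q n j) \<omega>" if j: "j \<in> {1..4}" for n j \<omega>
  proof -
    have eq: "(grid_sq M (Suc n) q \<subseteq> grid_sq M 1 (J j) \<and> x \<in> grid_sq M (Suc n) q) \<longleftrightarrow> q = Q n j" for q
      using twodim[OF M0, of u "fst (J j)" v "snd (J j)" n q] uv[OF j] unfolding xuv Q_def by simp
    have "x \<in> C (Suc n) j \<omega> \<longleftrightarrow> (\<exists>q. fst q < M ^ Suc n \<and> snd q < M ^ Suc n \<and>
        (grid_sq M (Suc n) q \<subseteq> grid_sq M 1 (J j) \<and> x \<in> grid_sq M (Suc n) q) \<and> \<not> kept M X (Suc n) q \<omega>)"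
      unfolding C_def Cset_def by blast
    also have "\<dots> \<longleftrightarrow> (\<exists>q. fst q < M ^ Suc n \<and> snd q < M ^ Suc n \<and> q = Q n j \<and> \<not> kept M X (Suc n) q \<omega>)"
      unfolding eq ..
    also have "\<dots> \<longleftrightarrow> \<not> kept M X (Suc n) (Q n j) \<omega>"
    proof
      assume "\<not> kept M X (Suc n) (Q n j) \<omega>"
      then show "\<exists>q. fst q < M ^ Suc n \<and> snd q < M ^ Suc n \<and> q = Q n j \<and> \<not> kept M X (Suc n) q \<omega>"
        using Qlt[OF j, of n] by blast
    qed blast
    finally show ?thesis .
  qed
  have subC: "C n j \<omega> \<subseteq> grid_sq M 1 (J j)" for n j \<omega> unfolding C_def Cset_def by blast
  have interC: "(\<Inter>j\<in>T. C (Suc n) j \<omega>) = (if \<forall>j\<in>T. \<not> kept M X (Suc n) (Q n j) \<omega> then {x} else {})"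
    if T: "{1,2} \<subseteq> T" "T \<subseteq> {1..4}" for T n \<omega>
  proof -
    have "(\<Inter>j\<in>T. C (Suc n) j \<omega>) \<subseteq> C (Suc n) 1 \<omega> \<inter> C (Suc n) 2 \<omega>" using T by blast
    also have "\<dots> \<subseteq> {x}" using subC[of "Suc n" 1 \<omega>] subC[of "Suc n" 2 \<omega>] J12 by blast
    finally have sub: "(\<Inter>j\<in>T. C (Suc n) j \<omega>) \<subseteq> {x}" .
    have "x \<in> (\<Inter>j\<in>T. C (Suc n) j \<omega>) \<longleftrightarrow> (\<forall>j\<in>T. x \<in> C (Suc n) j \<omega>)" by blast
    also have "\<dots> \<longleftrightarrow> (\<forall>j\<in>T. \<not> kept M X (Suc n) (Q n j) \<omega>)"
      by (intro ball_cong refl memC) (use T in auto)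
    finally have xin: "x \<in> (\<Inter>j\<in>T. C (Suc n) j \<omega>) \<longleftrightarrow> (\<forall>j\<in>T. \<not> kept M X (Suc n) (Q n j) \<omega>)" .
    show ?thesis using sub xin by auto
  qed
  have eulerC: "real_of_int (euler_char (\<Inter>j\<in>T. C (Suc n) j \<omega>))
      = indicator {\<omega>. \<forall>j\<in>T. \<not> kept M X (Suc n) (Q n j) \<omega>} \<omega>"
    if T: "{1,2} \<subseteq> T" "T \<subseteq> {1..4}" for T n \<omega>
    using interC[OF T, of n \<omega>] by (simp add: indicator_def euler_char_sing euler_char_empty)
  define I where "I = {(k::nat, q::nat \<times> nat). 1 \<le> k \<and> fst q < M ^ k \<and> snd q < M ^ k}"
  define Y where "Y = (\<lambda>(k, q). X k q)"
  define A where "A = (\<lambda>i. {\<omega> \<in> space P. Y i \<omega>})"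
  have indep': "P.indep_vars (\<lambda>_. count_space UNIV) Y I" using indep unfolding Y_def I_def .
  have indA: "P.indep_events A I"
    using P.indep_eventsI_indep_vars[OF indep', where P="\<lambda>i b. b"] unfolding A_def by simp
  have evA: "\<And>i. i \<in> I \<Longrightarrow> A i \<in> P.events" using indA unfolding P.indep_events_def by auto
  have probA1: "P.prob (A i) = p" if "i \<in> I" for i
    using that bern unfolding A_def Y_def I_def by auto
  have probA: "P.prob (\<Inter>i\<in>S. A i) = p ^ card S" if "S \<subseteq> I" "finite S" "S \<noteq> {}" for S
  proof -
    have "P.prob (\<Inter>i\<in>S. A i) = (\<Prod>i\<in>S. P.prob (A i))" using indA that unfolding P.indep_events_def by auto
    also have "\<dots> = (\<Prod>i\<in>S. p)" using probA1 that by (intro prod.cong) auto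
    finally show ?thesis by simp
  qed
  define B where "B = (\<lambda>n j. (\<lambda>k. (k, (fst (Q n j) div M ^ (Suc n - k), snd (Q n j) div M ^ (Suc n - k)))) ` {1..Suc n})"
  have Bfin: "finite (B n j)" for n j unfolding B_def by simp
  have Bcard: "card (B n j) = Suc n" for n j
  proof -
    have "inj_on (\<lambda>k. (k, (fst (Q n j) div M ^ (Suc n - k), snd (Q n j) div M ^ (Suc n - k)))) {1..Suc n}"
      by (auto simp: inj_on_def)
    then show ?thesis unfolding B_def by (simp add: card_image)
  qed
  have Bsub: "B n j \<subseteq> I" if j: "j \<in> {1..4}" for n j
  proof
    fix i assume "i \<in> B n j"
    then obtain k where k: "k \<in> {1..Suc n}" and i: "i = (k, (fst (Q n j) div M ^ (Suc n - k), snd (Q n j) div M ^ (Suc n - k)))"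
      unfolding B_def by auto
    have pw: "M ^ Suc n = M ^ k * M ^ (Suc n - k)" using k by (simp add: power_add[symmetric])
    have "fst (Q n j) div M ^ (Suc n - k) < M ^ k" "snd (Q n j) div M ^ (Suc n - k) < M ^ k"
      using Qlt[OF j, of n] unfolding pw by (auto intro!: less_mult_imp_div_less)
    then show "i \<in> I" unfolding i I_def using k by simp
  qed
  have anc: "a div M ^ (Suc n - k) div M ^ (k - 1) = a div M ^ n" if k: "k \<in> {1..Suc n}" for a n k
  proof -
    have "M ^ (Suc n - k) * M ^ (k - 1) = M ^ n" using k by (simp add: power_add[symmetric])
    then show ?thesis by (simp add: div_mult2_eq[symmetric])
  qed
  have Bdisj: "disjoint_family_on (B n) T" if T: "T \<subseteq> {1..4}" for n T
    unfolding disjoint_family_on_def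
  proof (intro ballI impI)
    fix j j' assume jj: "j \<in> T" "j' \<in> T" "j \<noteq> j'"
    show "B n j \<inter> B n j' = {}"
    proof (rule ccontr)
      assume "B n j \<inter> B n j' \<noteq> {}"
      then obtain i where "i \<in> B n j" "i \<in> B n j'" by blast
      then obtain k k' where k: "k \<in> {1..Suc n}" and "k' \<in> {1..Suc n}"
        and e: "(k, (fst (Q n j) div M ^ (Suc n - k), snd (Q n j) div M ^ (Suc n - k)))
           = (k', (fst (Q n j') div M ^ (Suc n - k'), snd (Q n j') div M ^ (Suc n - k')))"
        unfolding B_def by blast
      then have e1: "fst (Q n j) div M ^ (Suc n - k) = fst (Q n j') div M ^ (Suc n - k)"
        and e2: "snd (Q n j) div M ^ (Suc n - k) = snd (Q n j') div M ^ (Suc n - k)" by auto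
      have "fst (Q n j) div M ^ n = fst (Q n j') div M ^ n" "snd (Q n j) div M ^ n = snd (Q n j') div M ^ n"
        using anc[OF k, of "fst (Q n j)"] anc[OF k, of "fst (Q n j')"] anc[OF k, of "snd (Q n j)"]
          anc[OF k, of "snd (Q n j')"] e1 e2 by simp_all
      moreover have "j \<in> {1..4}" "j' \<in> {1..4}" using jj T by auto
      ultimately have "J j = J j'" using Qdiv[of j n] Qdiv[of j' n] by (simp add: prod_eq_iff)
      then show False using J_inj jj \<open>j \<in> {1..4}\<close> \<open>j' \<in> {1..4}\<close> unfolding inj_on_def by blast
    qed
  qed
  have kept_iff: "kept M X (Suc n) (Q n j) \<omega> \<longleftrightarrow> \<omega> \<in> (\<Inter>i\<in>B n j. A i)" if "\<omega> \<in> space P" for n j \<omega>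
    using that unfolding kept_def B_def A_def Y_def by auto
  have probE: "P.prob ({\<omega>. \<forall>j\<in>T. \<not> kept M X (Suc n) (Q n j) \<omega>} \<inter> space P) = (1 - p ^ Suc n) ^ card T"
    if T: "T \<subseteq> {1..4}" for T n
  proof -
    have fT: "finite T" using T finite_subset by blast
    have BsubT: "finite (B n j) \<and> B n j \<subseteq> I" if "j \<in> T" for j using Bfin Bsub that T by blast
    have "{\<omega>. \<forall>j\<in>T. \<not> kept M X (Suc n) (Q n j) \<omega>} \<inter> space P
        = space P \<inter> (\<Inter>i\<in>{}. A i) \<inter> (\<Inter>j\<in>T. space P - (\<Inter>i\<in>B n j. A i))"
    proof -
      have "\<omega> \<in> {\<omega>. \<forall>j\<in>T. \<not> kept M X (Suc n) (Q n j) \<omega>} \<inter> space P \<longleftrightarrow>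
          \<omega> \<in> space P \<inter> (\<Inter>i\<in>{}. A i) \<inter> (\<Inter>j\<in>T. space P - (\<Inter>i\<in>B n j. A i))" for \<omega>
      proof (cases "\<omega> \<in> space P")
        case True then show ?thesis by (simp add: kept_iff[OF True])
      qed simp
      then show ?thesis by blast
    qed
    also have "P.prob \<dots> = p ^ card ({} :: (nat \<times> (nat \<times> nat)) set) * (\<Prod>j\<in>T. 1 - p ^ card (B n j))"
      by (rule P.blocks_prob[where I=I, OF evA probA]) (simp_all add: fT BsubT Bdisj[OF T])
    also have "\<dots> = (1 - p ^ Suc n) ^ card T" using Bcard by simp
    finally show ?thesis .
  qed
  have intE: "integral\<^sup>L P (\<lambda>\<omega>. real_of_int (euler_char (\<Inter>j\<in>T. C (Suc n) j \<omega>))) = (1 - p ^ Suc n) ^ card T"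
    if T: "{1,2} \<subseteq> T" "T \<subseteq> {1..4}" for T n
    using eulerC[OF T] probE[OF T(2)] by (simp add: Bochner_Integration.integral_indicator)
  have pp: "p > 0" using p_gt Mp by (smt (verit) divide_pos_pos zero_less_power)
  have M2p: "real M ^ 2 * p > 1" using p_gt Mp by (simp add: field_simps)
  define c where "c = 1 / (real M ^ 2 * p)"
  have c0: "c > 0" and c1: "c < 1" unfolding c_def using M2p by auto
  have rpos: "r > 0" unfolding r_def using Mp by simp
  have lnM: "ln (real M) > 0" using Mr by simp
  have rp: "r powr (real (Suc n) * D) = c ^ Suc n" for n
  proof -
    have lnr: "ln r = - ln (real M)" unfolding r_def using Mp by (simp add: ln_div)
    have "D * ln r = - ln (real M ^ 2 * p)" unfolding D_def lnr using lnM by simp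
    have "r powr (real (Suc n) * D) = exp (real (Suc n) * (D * ln r))" unfolding powr_def using rpos
      by (simp add: mult.assoc)
    also have "\<dots> = exp (- ln (real M ^ 2 * p)) ^ Suc n"
      unfolding \<open>D * ln r = - ln (real M ^ 2 * p)\<close> by (rule exp_of_nat_mult)
    also have "exp (- ln (real M ^ 2 * p)) = c"
    proof -
      have y0: "real M ^ 2 * p > 0" using M2p by linarith
      have "exp (- ln (real M ^ 2 * p)) = inverse (real M ^ 2 * p)" by (simp only: exp_minus exp_ln[OF y0])
      then show ?thesis unfolding c_def by (simp only: inverse_eq_divide)
    qed
    finally show ?thesis .
  qed
  have geo: "(\<lambda>n. c ^ Suc n * (p ^ Suc n) ^ m) sums (c * p ^ m / (1 - c * p ^ m))" for m
  proof -
    have z0: "0 \<le> c * p ^ m" using c0 pp by simp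
    have "p ^ m \<le> 1" using pp p_le by (simp add: power_le_one)
    then have "c * p ^ m \<le> c" using c0 by (simp add: mult_left_le)
    then have z1: "c * p ^ m < 1" using c1 by linarith
    have "(\<lambda>n. (c * p ^ m) * (c * p ^ m) ^ n) sums ((c * p ^ m) * (1 / (1 - c * p ^ m)))"
      by (rule sums_mult) (rule geometric_sums, use z0 z1 in simp)
    moreover have e: "\<And>n. (c * p ^ m) * (c * p ^ m) ^ n = c ^ Suc n * (p ^ Suc n) ^ m"
      using pow_swap[of c p m] by (simp only: power_Suc)
    ultimately show ?thesis by (simp only: e times_divide_eq_right mult_1_right)
  qed
  have Mbig: "real M ^ 2 > p ^ k" for k
  proof -
    have "p ^ k \<le> 1" using pp p_le by (simp add: power_le_one)
    moreover have "real M ^ 2 \<ge> 4"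
    proof -
      have "2 * 2 \<le> real M * real M" by (rule mult_mono) (use Mr in auto)
      then show ?thesis by (simp add: power2_eq_square)
    qed
    ultimately show ?thesis by linarith
  qed
  have gval0: "c * p ^ 0 / (1 - c * p ^ 0) = 1 / (real M ^ 2 * p - 1)"
    unfolding c_def using M2p pp M0 by (simp add: field_simps)
  have gvalk: "c * p ^ Suc k / (1 - c * p ^ Suc k) = p ^ k / (real M ^ 2 - p ^ k)" for k
  proof -
    have "c * p ^ Suc k = p ^ k / real M ^ 2" unfolding c_def using pp Mp by (simp add: field_simps)
    then show ?thesis using frac_lem[of "real M ^ 2" "p ^ k"] Mbig[of k] Mp by simp
  qed
  have gval1: "c * p ^ 1 / (1 - c * p ^ 1) = 1 / (real M ^ 2 - 1)" using gvalk[of 0] by simp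
  have gval2: "c * p ^ 2 / (1 - c * p ^ 2) = p / (real M ^ 2 - p)" using gvalk[of 1] by (simp add: numeral_2_eq_2)
  have gval3: "c * p ^ 3 / (1 - c * p ^ 3) = p ^ 2 / (real M ^ 2 - p ^ 2)" using gvalk[of 2] by (simp add: numeral_3_eq_3 numeral_2_eq_2)
  have gval4: "c * p ^ 4 / (1 - c * p ^ 4) = p ^ 3 / (real M ^ 2 - p ^ 3)" using gvalk[of 3]
    by (simp add: eval_nat_numeral)
  let ?g = "\<lambda>m. c * p ^ m / (1 - c * p ^ m)"
  let ?t = "\<lambda>m n. c ^ Suc n * (p ^ Suc n) ^ m"
  have i2: "integral\<^sup>L P (\<lambda>\<omega>. real_of_int (euler_char (C (Suc n) 1 \<omega> \<inter> C (Suc n) 2 \<omega>))) = (1 - p ^ Suc n) ^ 2" for n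
  proof -
    have e: "(\<lambda>\<omega>. real_of_int (euler_char (C (Suc n) 1 \<omega> \<inter> C (Suc n) 2 \<omega>)))
          = (\<lambda>\<omega>. real_of_int (euler_char (\<Inter>j\<in>{1,2}. C (Suc n) j \<omega>)))" by simp
    have "integral\<^sup>L P (\<lambda>\<omega>. real_of_int (euler_char (\<Inter>j\<in>{1,2}. C (Suc n) j \<omega>))) = (1 - p ^ Suc n) ^ card {1,2::nat}"
      by (rule intE) auto
    moreover have cc: "card {1,2::nat} = 2" by simp
    ultimately show ?thesis unfolding e by (simp only: cc)
  qed
  have i3: "integral\<^sup>L P (\<lambda>\<omega>. real_of_int (euler_char (C (Suc n) 1 \<omega> \<inter> C (Suc n) 2 \<omega> \<inter> C (Suc n) 3 \<omega>))) = (1 - p ^ Suc n) ^ 3" for n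
  proof -
    have e: "(\<lambda>\<omega>. real_of_int (euler_char (C (Suc n) 1 \<omega> \<inter> C (Suc n) 2 \<omega> \<inter> C (Suc n) 3 \<omega>)))
          = (\<lambda>\<omega>. real_of_int (euler_char (\<Inter>j\<in>{1,2,3}. C (Suc n) j \<omega>)))" by (simp add: Int_assoc)
    have "integral\<^sup>L P (\<lambda>\<omega>. real_of_int (euler_char (\<Inter>j\<in>{1,2,3}. C (Suc n) j \<omega>))) = (1 - p ^ Suc n) ^ card {1,2,3::nat}"
      by (rule intE) auto
    moreover have cc: "card {1,2,3::nat} = 3" by simp
    ultimately show ?thesis unfolding e by (simp only: cc)
  qed
  have i4: "integral\<^sup>L P (\<lambda>\<omega>. real_of_int (euler_char (\<Inter>j\<in>{1..4}. C (Suc n) j \<omega>))) = (1 - p ^ Suc n) ^ 4" for n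
  proof -
    have "integral\<^sup>L P (\<lambda>\<omega>. real_of_int (euler_char (\<Inter>j\<in>{1..4}. C (Suc n) j \<omega>))) = (1 - p ^ Suc n) ^ card {1..4::nat}"
      by (rule intE) auto
    moreover have cc: "card {1..4::nat} = 4" by simp
    ultimately show ?thesis by (simp only: cc)
  qed
  have s2: "(\<lambda>n. r powr (real (Suc n) * D) *
              integral\<^sup>L P (\<lambda>\<omega>. real_of_int (euler_char (C (Suc n) 1 \<omega> \<inter> C (Suc n) 2 \<omega>))))
        sums (?g 0 - 2 * ?g 1 + ?g 2)"
  proof -
    have "(\<lambda>n. ?t 0 n - 2 * ?t 1 n + ?t 2 n) sums (?g 0 - 2 * ?g 1 + ?g 2)"
      by (intro sums_add sums_diff sums_mult geo)
    moreover have "r powr (real (Suc n) * D) *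
              integral\<^sup>L P (\<lambda>\<omega>. real_of_int (euler_char (C (Suc n) 1 \<omega> \<inter> C (Suc n) 2 \<omega>)))
        = ?t 0 n - 2 * ?t 1 n + ?t 2 n" for n
      unfolding i2 rp by (simp add: power2_eq_square algebra_simps)
    ultimately show ?thesis by simp
  qed
  have s3: "(\<lambda>n. r powr (real (Suc n) * D) *
              integral\<^sup>L P (\<lambda>\<omega>. real_of_int (euler_char
                 (C (Suc n) 1 \<omega> \<inter> C (Suc n) 2 \<omega> \<inter> C (Suc n) 3 \<omega>))))
        sums (?g 0 - 3 * ?g 1 + 3 * ?g 2 - ?g 3)"
  proof -
    have "(\<lambda>n. ?t 0 n - 3 * ?t 1 n + 3 * ?t 2 n - ?t 3 n) sums (?g 0 - 3 * ?g 1 + 3 * ?g 2 - ?g 3)"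
      by (intro sums_add sums_diff sums_mult geo)
    moreover have "r powr (real (Suc n) * D) *
              integral\<^sup>L P (\<lambda>\<omega>. real_of_int (euler_char (C (Suc n) 1 \<omega> \<inter> C (Suc n) 2 \<omega> \<inter> C (Suc n) 3 \<omega>)))
        = ?t 0 n - 3 * ?t 1 n + 3 * ?t 2 n - ?t 3 n" for n
      unfolding i3 rp by (simp add: eval_nat_numeral algebra_simps)
    ultimately show ?thesis by simp
  qed
  have s4: "(\<lambda>n. r powr (real (Suc n) * D) *
              integral\<^sup>L P (\<lambda>\<omega>. real_of_int (euler_char (\<Inter>j\<in>{1..4}. C (Suc n) j \<omega>))))
        sums (?g 0 - 4 * ?g 1 + 6 * ?g 2 - 4 * ?g 3 + ?g 4)"
  proof -
    have "(\<lambda>n. ?t 0 n - 4 * ?t 1 n + 6 * ?t 2 n - 4 * ?t 3 n + ?t 4 n) sums (?g 0 - 4 * ?g 1 + 6 * ?g 2 - 4 * ?g 3 + ?g 4)"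
      by (intro sums_add sums_diff sums_mult geo)
    moreover have "r powr (real (Suc n) * D) *
              integral\<^sup>L P (\<lambda>\<omega>. real_of_int (euler_char (\<Inter>j\<in>{1..4}. C (Suc n) j \<omega>)))
        = ?t 0 n - 4 * ?t 1 n + 6 * ?t 2 n - 4 * ?t 3 n + ?t 4 n" for n
      unfolding i4 rp by (simp add: eval_nat_numeral algebra_simps)
    ultimately show ?thesis by simp
  qed
  show ?thesis
    unfolding E2_def E3_def E4_def
    using sums_unique[OF s2, symmetric] sums_unique[OF s3, symmetric] sums_unique[OF s4, symmetric]
      gval0 gval1 gval2 gval3 gval4
    by simp
qed

end
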